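(* Fix $\beta\in(1,2)$, let $Y$ be the stationary random walk described in the context and $\mathcal C=\mathbb N^+$. Then for every $t\ge0$, $$\mathbf P[Y_0\in\mathcal C,\,Y_t\in\mathcal C]-\mathbf P[Y_0\in\mathcal C]^2\le\tfrac12\,\mathbf P\big[Y_s\in\mathcal C\ \forall s\in\{0,\dots,t\}\big],$$ and for every $\epsilon>0$ there is $t_0$ such that for all $t\ge t_0$, $$\mathbf P[Y_0\in\mathcal C,\,Y_t\in\mathcal C]-\mathbf P[Y_0\in\mathcal C]^2\ge\big(\tfrac12-\epsilon\big)\,\mathbf P\big[Y_s\in\mathcal C\ \forall s\in\{0,\dots,t\}\big].$$
   Context: The graph has vertex set $\mathbb Z^*=\mathbb Z\setminus\{0\}$ and edges: nearest-neighbour edges $\{n,n+1\}$ and $\{-(n+1),-n\}$ for $n\ge1$, the edge $\{-1,1\}$, and a self-loop at every vertex. Conductances: $c_{n,n+1}=c_{-(n+1),-n}=n^{-\beta}$ for $n\ge1$; $c_{-1,1}=c_{1,1}=c_{-1,-1}=1/2$; and for $|n|\ge2$ the self-loop conductance is $c_{n,n}=c_{n,n-1}+c_{n,n+1}$. The discrete-time walk moves from $x$ to $y$ with probability $c_{x,y}/\pi(x)$, where $\pi(x)=\sum_y c_{x,y}$ (self-loop counted once); it is run in stationarity (started from normalized $\pi$), with law $\mathbf P$. *)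

theory Defs
  imports "HOL-Analysis.Analysis"
begin

text \<open>The graph on vertex set Z* = Z - {0}, encoded as int with 0 excluded.
  Conductances c_{x,y} (symmetric; zero off the edge set and at 0).\<close>

definition cond :: "real \<Rightarrow> int \<Rightarrow> int \<Rightarrow> real" where
  "cond \<beta> x y =
     (if x = 0 \<or> y = 0 then 0
      else if (x = -1 \<and> y = 1) \<or> (x = 1 \<and> y = -1) then 1/2
      else if x = y then
        (if \<bar>x\<bar> = 1 then 1/2
         else real_of_int (\<bar>x\<bar> - 1) powr (-\<beta>) + real_of_int \<bar>x\<bar> powr (-\<beta>))
      else if \<bar>x - y\<bar> = 1 \<and> sgn x = sgn y then
        real_of_int (min \<bar>x\<bar> \<bar>y\<bar>) powr (-\<beta>)
      else 0)"

definition pi_w :: "real \<Rightarrow> int \<Rightarrow> real" where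
  "pi_w \<beta> x = (\<Sum>\<^sub>\<infinity>y. cond \<beta> x y)"

definition pi_norm :: "real \<Rightarrow> int \<Rightarrow> real" where
  "pi_norm \<beta> x = (if x = 0 then 0 else pi_w \<beta> x / (\<Sum>\<^sub>\<infinity>z\<in>-{0}. pi_w \<beta> z))"

definition trans_p :: "real \<Rightarrow> int \<Rightarrow> int \<Rightarrow> real" where
  "trans_p \<beta> x y = (if x = 0 then 0 else cond \<beta> x y / pi_w \<beta> x)"

fun trans_pow :: "real \<Rightarrow> nat \<Rightarrow> int \<Rightarrow> int \<Rightarrow> real" where
  "trans_pow \<beta> 0 x y = (if x = y then 1 else 0)"
| "trans_pow \<beta> (Suc n) x y = (\<Sum>\<^sub>\<infinity>z. trans_p \<beta> x z * trans_pow \<beta> n z y)"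

text \<open>stay_in beta C t x = probability, starting from x, that Y_s in C for all s in {1..t}.\<close>
fun stay_in :: "real \<Rightarrow> int set \<Rightarrow> nat \<Rightarrow> int \<Rightarrow> real" where
  "stay_in \<beta> C 0 x = 1"
| "stay_in \<beta> C (Suc n) x = (\<Sum>\<^sub>\<infinity>z\<in>C. trans_p \<beta> x z * stay_in \<beta> C n z)"

definition posC :: "int set" where "posC = {0<..}"

definition prob_start :: "real \<Rightarrow> int set \<Rightarrow> real" where
  "prob_start \<beta> C = (\<Sum>\<^sub>\<infinity>x\<in>C. pi_norm \<beta> x)"

definition prob_both :: "real \<Rightarrow> int set \<Rightarrow> nat \<Rightarrow> real" where
  "prob_both \<beta> C t = (\<Sum>\<^sub>\<infinity>x\<in>C. pi_norm \<beta> x * (\<Sum>\<^sub>\<infinity>y\<in>C. trans_pow \<beta> t x y))"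

definition prob_stay :: "real \<Rightarrow> int set \<Rightarrow> nat \<Rightarrow> real" where
  "prob_stay \<beta> C t = (\<Sum>\<^sub>\<infinity>x\<in>C. pi_norm \<beta> x * stay_in \<beta> C t x)"

end

theory Submission
  imports Defs
begin


locale walk =
  fixes \<beta> :: real
  assumes b1: "1 < \<beta>" and b2: "\<beta> < 2"
begin

definition a :: "nat \<Rightarrow> real" where "a k = real k powr (-\<beta>)"
definition w :: "nat \<Rightarrow> real" where "w n = 2 * (a n + a (Suc n))"
definition L :: "nat \<Rightarrow> real" where "L n = a n / w n"
definition r :: "nat \<Rightarrow> real" where "r n = a (Suc n) / w n"
definition cc :: "nat \<Rightarrow> real" where "cc n = (if n = 0 then 1/4 else 1/2)"
definition Q :: "(nat \<Rightarrow> real) \<Rightarrow> nat \<Rightarrow> real" where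
  "Q f n = L n * f (n - 1) + cc n * f n + r n * f (Suc n)"
definition Q' :: "(nat \<Rightarrow> real) \<Rightarrow> nat \<Rightarrow> real" where
  "Q' f n = L n * f (n - 1) + (if n = 0 then 0 else 1/2) * f n + r n * f (Suc n)"
definition s :: "nat \<Rightarrow> nat \<Rightarrow> real" where "s t = (Q ^^ t) (\<lambda>_. 1)"
definition g :: "nat \<Rightarrow> nat \<Rightarrow> real" where "g t = (Q' ^^ t) (\<lambda>_. 1)"
definition ws :: "(nat \<Rightarrow> real) \<Rightarrow> real" where "ws f = (\<Sum>n. w n * f n)"
definition bnd :: "(nat \<Rightarrow> real) \<Rightarrow> bool" where "bnd f \<longleftrightarrow> (\<exists>B. \<forall>n. \<bar>f n\<bar> \<le> B)"

lemma a0[simp]: "a 0 = 0" by (simp add: a_def)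
lemma a1[simp]: "a 1 = 1" unfolding a_def by simp
lemma a1'[simp]: "a (Suc 0) = 1" unfolding a_def by simp
lemma a_nonneg: "a n \<ge> 0" by (simp add: a_def)
lemma a_Suc_pos: "a (Suc n) > 0" by (simp add: a_def)
lemma w_pos: "w n > 0" using a_nonneg[of n] a_Suc_pos[of n] by (simp add: w_def)
lemma w0[simp]: "w 0 = 2" by (simp add: w_def)
lemma L0[simp]: "L 0 = 0" by (simp add: L_def)
lemma L_nonneg: "L n \<ge> 0" unfolding L_def by (intro divide_nonneg_pos a_nonneg w_pos)
lemma r_nonneg: "r n \<ge> 0" unfolding r_def by (intro divide_nonneg_pos a_nonneg w_pos)
lemma wL: "w n * L n = a n" using w_pos[of n] by (simp add: L_def)
lemma wr: "w n * r n = a (Suc n)" using w_pos[of n] by (simp add: r_def)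
lemma Lcr: "L n + cc n + r n = (if n = 0 then 3/4 else 1)"
proof -
  have p: "a n + a (Suc n) > 0" using a_nonneg[of n] a_Suc_pos[of n] by simp
  have "L n + r n = (a n + a (Suc n)) / w n" by (simp add: L_def r_def add_divide_distrib)
  also have "\<dots> = 1/2" using p unfolding w_def by (simp add: field_simps)
  finally have "L n + r n = 1/2" .
  then show ?thesis by (cases "n=0") (auto simp: cc_def)
qed
lemma a_le_w: "a (Suc n) \<le> w n" using a_nonneg[of n] a_Suc_pos[of n] by (simp add: w_def)

lemma summable_a: "summable a"
proof -
  have "summable (\<lambda>n. real n powr (-\<beta>))" using b1 by (simp add: summable_real_powr_iff)
  moreover have "a = (\<lambda>n. real n powr (-\<beta>))" by (simp add: fun_eq_iff a_def)
  ultimately show ?thesis by simp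
qed
lemma summable_w: "summable w"
  unfolding w_def using summable_a summable_Suc_iff[of a]
  by (intro summable_mult summable_add) auto

lemma summable_wf: assumes "\<forall>n. \<bar>f n\<bar> \<le> B" shows "summable (\<lambda>n. w n * f n)"
proof (rule summable_comparison_test[where g="\<lambda>n. w n * B"])
  show "\<exists>N. \<forall>n\<ge>N. norm (w n * f n) \<le> w n * B"
    using assms w_pos by (auto simp: abs_mult abs_of_pos less_imp_le intro!: mult_left_mono)
  show "summable (\<lambda>n. w n * B)" using summable_w by (rule summable_mult2)
qed
lemma summable_wf': "bnd f \<Longrightarrow> summable (\<lambda>n. w n * f n)"
  using summable_wf by (auto simp: bnd_def)

lemma summable_af: assumes "\<forall>n. \<bar>f n\<bar> \<le> B" shows "summable (\<lambda>n. a n * f n)"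
proof (rule summable_comparison_test[where g="\<lambda>n. a n * B"])
  show "\<exists>N. \<forall>n\<ge>N. norm (a n * f n) \<le> a n * B"
    using assms a_nonneg by (auto simp: abs_mult abs_of_nonneg intro!: mult_left_mono)
  show "summable (\<lambda>n. a n * B)" using summable_a by (rule summable_mult2)
qed

lemma bnd_mult: "bnd f \<Longrightarrow> bnd h \<Longrightarrow> bnd (\<lambda>n. f n * h n)"
proof -
  assume "bnd f" "bnd h"
  then obtain B1 B2 where "\<forall>n. \<bar>f n\<bar> \<le> B1" "\<forall>n. \<bar>h n\<bar> \<le> B2" by (auto simp: bnd_def)
  then have "\<forall>n. \<bar>f n * h n\<bar> \<le> B1 * B2" by (simp add: abs_mult mult_mono')
  then show ?thesis by (auto simp: bnd_def)
qed
lemma bnd_add: "bnd f \<Longrightarrow> bnd h \<Longrightarrow> bnd (\<lambda>n. f n + h n)"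
proof -
  assume "bnd f" "bnd h"
  then obtain B1 B2 where "\<forall>n. \<bar>f n\<bar> \<le> B1" "\<forall>n. \<bar>h n\<bar> \<le> B2" by (auto simp: bnd_def)
  then have "\<forall>n. \<bar>f n + h n\<bar> \<le> B1 + B2" by (meson abs_triangle_ineq add_mono order_trans)
  then show ?thesis by (auto simp: bnd_def)
qed
lemma bnd_diff: "bnd f \<Longrightarrow> bnd h \<Longrightarrow> bnd (\<lambda>n. f n - h n)"
proof -
  assume "bnd f" "bnd h"
  then obtain B1 B2 where "\<forall>n. \<bar>f n\<bar> \<le> B1" "\<forall>n. \<bar>h n\<bar> \<le> B2" by (auto simp: bnd_def)
  then have "\<forall>n. \<bar>f n - h n\<bar> \<le> B1 + B2" by (meson abs_triangle_ineq4 add_mono order_trans)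
  then show ?thesis by (auto simp: bnd_def)
qed
lemma bnd_shift: "bnd f \<Longrightarrow> bnd (\<lambda>n. f (Suc n))" "bnd f \<Longrightarrow> bnd (\<lambda>n. f (n - 1))"
  by (auto simp: bnd_def)

lemma Q_bnd: assumes "bnd f" shows "bnd (Q f)"
proof -
  obtain B where B: "\<forall>n. \<bar>f n\<bar> \<le> B" using assms by (auto simp: bnd_def)
  have c1: "\<bar>Q f n\<bar> \<le> (L n + cc n + r n) * B" for n
  proof -
    have "\<bar>Q f n\<bar> \<le> L n * \<bar>f (n-1)\<bar> + cc n * \<bar>f n\<bar> + r n * \<bar>f (Suc n)\<bar>"
    proof -
      have "\<bar>Q f n\<bar> \<le> \<bar>L n * f (n-1)\<bar> + \<bar>cc n * f n\<bar> + \<bar>r n * f (Suc n)\<bar>"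
        unfolding Q_def by (rule order_trans[OF abs_triangle_ineq add_right_mono[OF abs_triangle_ineq]])
      then show ?thesis using L_nonneg[of n] r_nonneg[of n] by (simp add: abs_mult cc_def)
    qed
    also have "\<dots> \<le> L n * B + cc n * B + r n * B"
      using B L_nonneg[of n] r_nonneg[of n]
      by (intro add_mono mult_left_mono) (auto simp: cc_def)
    finally show ?thesis by (simp add: algebra_simps)
  qed
  have c2: "(L n + cc n + r n) * B \<le> \<bar>B\<bar>" for n
  proof -
    have x0: "0 \<le> L n + cc n + r n" using L_nonneg[of n] r_nonneg[of n] by (simp add: cc_def)
    have x1: "L n + cc n + r n \<le> 1" using Lcr[of n] by simp
    have "(L n + cc n + r n) * B \<le> (L n + cc n + r n) * \<bar>B\<bar>" by (intro mult_left_mono) (simp_all add: x0)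
    also have "\<dots> \<le> \<bar>B\<bar>" using x0 x1 by (intro mult_left_le_one_le) auto
    finally show ?thesis .
  qed
  have "\<bar>Q f n\<bar> \<le> \<bar>B\<bar>" for n using c1[of n] c2[of n] by linarith
  then show ?thesis unfolding bnd_def by blast
qed

lemma wQ: "w n * Q f n = a n * f (n - 1) + w n * cc n * f n + a (Suc n) * f (Suc n)"
proof -
  have "w n * Q f n = (w n * L n) * f (n - 1) + w n * cc n * f n + (w n * r n) * f (Suc n)"
    unfolding Q_def by (simp add: algebra_simps)
  then show ?thesis by (simp only: wL wr)
qed

lemma shift_sum:
  assumes "summable (\<lambda>n. a (Suc n) * F n)"
  shows "(\<Sum>n. a n * F (n - 1)) = (\<Sum>n. a (Suc n) * F n)"
proof -
  have "summable (\<lambda>n. a (Suc (n - 1)) * F (n - 1) * (if n = 0 then 0 else 1))"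
  proof -
    have "summable (\<lambda>n. (\<lambda>m. a (Suc (m - 1)) * F (m - 1) * (if m = 0 then 0 else 1)) (Suc n))"
      using assms by simp
    then show ?thesis using summable_Suc_iff by blast
  qed
  moreover have "(\<lambda>n. a (Suc (n - 1)) * F (n - 1) * (if n = 0 then 0 else 1)) = (\<lambda>n. a n * F (n - 1))"
    by (auto simp: fun_eq_iff)
  ultimately have sm: "summable (\<lambda>n. a n * F (n - 1))" by simp
  show ?thesis using suminf_split_head[OF sm] by simp
qed

lemma shift_sum':
  assumes "summable (\<lambda>n. a (Suc n) * G (Suc n))"
  shows "(\<Sum>n. a n * G n) = (\<Sum>n. a (Suc n) * G (Suc n))"
proof -
  have sm: "summable (\<lambda>n. a n * G n)" using assms summable_Suc_iff[of "\<lambda>n. a n * G n"] by simp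
  show ?thesis using suminf_split_head[OF sm] by simp
qed

lemma reversible:
  assumes f: "bnd f" and h: "bnd h"
  shows "ws (\<lambda>n. Q f n * h n) = ws (\<lambda>n. f n * Q h n)"
proof -
  obtain B1 B2 where B1: "\<forall>n. \<bar>f n\<bar> \<le> B1" and B2: "\<forall>n. \<bar>h n\<bar> \<le> B2"
    using f h by (auto simp: bnd_def)
  have fh: "\<forall>n. \<bar>f n * h (Suc n)\<bar> \<le> B1 * B2" "\<forall>n. \<bar>f (Suc n) * h n\<bar> \<le> B1 * B2"
    "\<forall>n. \<bar>f (n-1) * h n\<bar> \<le> B1 * B2" "\<forall>n. \<bar>f n * h (n-1)\<bar> \<le> B1 * B2"
    using B1 B2 by (auto simp: abs_mult intro!: mult_mono)
  have fh5: "\<forall>n. \<bar>cc n * f n * h n\<bar> \<le> B1 * B2"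
  proof
    fix n
    have "\<bar>cc n * f n * h n\<bar> \<le> \<bar>f n * h n\<bar>" by (auto simp: cc_def abs_mult)
    also have "\<dots> \<le> B1 * B2" using B1 B2 by (auto simp: abs_mult intro!: mult_mono)
    finally show "\<bar>cc n * f n * h n\<bar> \<le> B1 * B2" .
  qed
  have sA: "summable (\<lambda>n. a (Suc n) * (f n * h (Suc n)))"
    using summable_af[OF fh(1)] summable_Suc_iff[of "\<lambda>n. a n * (f (n - 1) * h n)"]
    using summable_Suc_iff[of "\<lambda>n. a n * (f (n-1) * h n)"] summable_af[OF fh(3)] by simp
  have sB: "summable (\<lambda>n. a (Suc n) * (f (Suc n) * h n))"
    using summable_Suc_iff[of "\<lambda>n. a n * (f n * h (n-1))"] summable_af[OF fh(4)] by simp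
  have s1: "summable (\<lambda>n. a n * (f (n-1) * h n))" using summable_af[OF fh(3)] .
  have s2: "summable (\<lambda>n. w n * (cc n * f n * h n))" using summable_wf[OF fh5] .
  have s3: "summable (\<lambda>n. a (Suc n) * (f (Suc n) * h n))" using sB .
  have s1': "summable (\<lambda>n. a n * (f n * h (n-1)))" using summable_af[OF fh(4)] .
  have s3': "summable (\<lambda>n. a (Suc n) * (f n * h (Suc n)))" using sA .
  have e1: "w n * (Q f n * h n) = a n * (f (n-1) * h n) + w n * (cc n * f n * h n) + a (Suc n) * (f (Suc n) * h n)" for n
  proof -
    have "w n * (Q f n * h n) = (w n * Q f n) * h n" by (simp only: mult.assoc)
    also have "\<dots> = (a n * f (n - 1) + w n * cc n * f n + a (Suc n) * f (Suc n)) * h n" by (simp only: wQ)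
    also have "\<dots> = a n * (f (n-1) * h n) + w n * (cc n * f n * h n) + a (Suc n) * (f (Suc n) * h n)"
      by (simp add: algebra_simps)
    finally show ?thesis .
  qed
  have e2: "w n * (f n * Q h n) = a n * (f n * h (n-1)) + w n * (cc n * f n * h n) + a (Suc n) * (f n * h (Suc n))" for n
  proof -
    have "w n * (f n * Q h n) = f n * (w n * Q h n)" by (simp only: mult.left_commute)
    also have "\<dots> = f n * (a n * h (n - 1) + w n * cc n * h n + a (Suc n) * h (Suc n))" by (simp only: wQ)
    also have "\<dots> = a n * (f n * h (n-1)) + w n * (cc n * f n * h n) + a (Suc n) * (f n * h (Suc n))"
      by (simp add: algebra_simps)
    finally show ?thesis .
  qed
  have "ws (\<lambda>n. Q f n * h n) = (\<Sum>n. a n * (f (n-1) * h n) + w n * (cc n * f n * h n) + a (Suc n) * (f (Suc n) * h n))"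
    unfolding ws_def by (intro suminf_cong) (rule e1)
  also have "\<dots> = (\<Sum>n. a n * (f (n-1) * h n)) + (\<Sum>n. w n * (cc n * f n * h n)) + (\<Sum>n. a (Suc n) * (f (Suc n) * h n))"
    using s1 s2 s3 by (simp add: suminf_add summable_add)
  also have "(\<Sum>n. a n * (f (n-1) * h n)) = (\<Sum>n. a (Suc n) * (f n * h (Suc n)))"
    using shift_sum'[of "\<lambda>n. f (n-1) * h n"] sA by simp
  also have "(\<Sum>n. a (Suc n) * (f (Suc n) * h n)) = (\<Sum>n. a n * (f n * h (n-1)))"
    using shift_sum'[of "\<lambda>n. f n * h (n-1)"] sB by simp
  also have "(\<Sum>n. a (Suc n) * (f n * h (Suc n))) + (\<Sum>n. w n * (cc n * f n * h n)) + (\<Sum>n. a n * (f n * h (n-1)))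
     = (\<Sum>n. a n * (f n * h (n-1)) + w n * (cc n * f n * h n) + a (Suc n) * (f n * h (Suc n)))"
  proof -
    have "(\<Sum>n. a n * (f n * h (n-1)) + w n * (cc n * f n * h n) + a (Suc n) * (f n * h (Suc n)))
      = (\<Sum>n. a n * (f n * h (n-1))) + (\<Sum>n. w n * (cc n * f n * h n)) + (\<Sum>n. a (Suc n) * (f n * h (Suc n)))"
      using s1' s2 s3' by (simp add: suminf_add summable_add)
    then show ?thesis by linarith
  qed
  also have "\<dots> = ws (\<lambda>n. f n * Q h n)"
    unfolding ws_def by (intro suminf_cong) (rule e2[symmetric])
  finally show ?thesis .
qed


lemma Q_add: "Q (\<lambda>n. f n + h n) n = Q f n + Q h n" by (simp add: Q_def algebra_simps)
lemma Q_diff: "Q (\<lambda>n. f n - h n) n = Q f n - Q h n" by (simp add: Q_def algebra_simps)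
lemma Q_mono: "(\<And>n. f n \<le> h n) \<Longrightarrow> Q f n \<le> Q h n"
  unfolding Q_def using L_nonneg[of n] r_nonneg[of n]
  by (intro add_mono mult_left_mono) (auto simp: cc_def)
lemma Q_nonneg: "(\<And>n. 0 \<le> f n) \<Longrightarrow> 0 \<le> Q f n"
  unfolding Q_def using L_nonneg[of n] r_nonneg[of n] by (auto simp: cc_def)
lemma Q1: "Q (\<lambda>_. 1) n = 1 - (if n = 0 then 1/4 else 0)"
  using Lcr[of n] by (simp add: Q_def)
lemma Q'_eq: "Q' f n = Q f n - (if n = 0 then f 0 / 4 else 0)"
  by (simp add: Q_def Q'_def cc_def)
lemma s_Suc: "s (Suc t) = Q (s t)" by (simp add: s_def)
lemma g_Suc: "g (Suc t) = Q' (g t)" by (simp add: g_def)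
lemma s0: "s 0 = (\<lambda>_. 1)" by (simp add: s_def)
lemma g0: "g 0 = (\<lambda>_. 1)" by (simp add: g_def)

lemma s_bounds: "0 \<le> s t n \<and> s t n \<le> 1"
proof (induction t arbitrary: n)
  case 0 then show ?case by (simp add: s0)
next
  case (Suc t)
  have "0 \<le> Q (s t) n" using Suc by (intro Q_nonneg) auto
  moreover have "Q (s t) n \<le> Q (\<lambda>_. 1) n" using Suc by (intro Q_mono) auto
  moreover have "Q (\<lambda>_. 1) n \<le> 1" by (simp add: Q1)
  ultimately show ?case by (simp add: s_Suc)
qed

lemma g_bounds: "0 \<le> g t n \<and> g t n \<le> s t n"
proof (induction t arbitrary: n)
  case 0 then show ?case by (simp add: s0 g0)
next
  case (Suc t)
  have "0 \<le> Q' (g t) n" unfolding Q'_def using L_nonneg[of n] r_nonneg[of n] Suc by auto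
  moreover have "Q' (g t) n \<le> Q (g t) n" using Suc by (simp add: Q'_eq)
  moreover have "Q (g t) n \<le> Q (s t) n" using Suc by (intro Q_mono) auto
  ultimately show ?case by (simp add: s_Suc g_Suc)
qed

lemma s_dec: "s (Suc t) n \<le> s t n"
proof (induction t arbitrary: n)
  case 0 then show ?case using s_bounds[of 1 n] by (simp add: s0)
next
  case (Suc t)
  then show ?case unfolding s_Suc[of "Suc t"] s_Suc[of t] by (intro Q_mono) (simp add: s_Suc)
qed

lemma s_far: "t \<le> n \<Longrightarrow> s t n = 1"
proof (induction t arbitrary: n)
  case 0 then show ?case by (simp add: s0)
next
  case (Suc t)
  then have "n \<noteq> 0" by auto
  have "Q (s t) n = L n * 1 + cc n * 1 + r n * 1"
    unfolding Q_def using Suc by simp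
  also have "\<dots> = 1" using Lcr[of n] \<open>n \<noteq> 0\<close> by simp
  finally show ?case by (simp add: s_Suc)
qed

lemma bnd_s: "bnd (s t)" using s_bounds unfolding bnd_def by (metis abs_of_nonneg)
lemma bnd_g: "bnd (g t)" using g_bounds s_bounds unfolding bnd_def by (metis abs_of_nonneg order_trans)
lemma bnd_const: "bnd (\<lambda>_. c)" unfolding bnd_def by auto
lemma bnd_Qpow: "bnd h \<Longrightarrow> bnd ((Q ^^ m) h)"
  by (induction m) (auto intro: Q_bnd)

lemma ws_add: "bnd f \<Longrightarrow> bnd h \<Longrightarrow> ws (\<lambda>n. f n + h n) = ws f + ws h"
  unfolding ws_def using summable_wf'[of f] summable_wf'[of h]
  by (simp add: distrib_left suminf_add)
lemma ws_diff: "bnd f \<Longrightarrow> bnd h \<Longrightarrow> ws (\<lambda>n. f n - h n) = ws f - ws h"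
  unfolding ws_def using summable_wf'[of f] summable_wf'[of h]
  by (simp add: right_diff_distrib suminf_diff)
lemma ws_nonneg: assumes "bnd f" "\<And>n. 0 \<le> f n" shows "0 \<le> ws f"
proof -
  have "\<And>n. 0 \<le> w n * f n" using assms(2) w_pos by (simp add: order.strict_implies_order)
  then show ?thesis using summable_wf'[OF assms(1)] unfolding ws_def by (intro suminf_nonneg)
qed
lemma ws_delta: "ws (\<lambda>n. if n = 0 then c else 0) = 2 * c"
proof -
  have "(\<lambda>n. w n * (if n = 0 then c else 0)) = (\<lambda>n. if n = 0 then w 0 * c else 0)" by auto
  moreover have "(\<lambda>n. if n = 0 then w 0 * c else 0) sums (w 0 * c)"
    using sums_single[of 0 "\<lambda>_. w 0 * c"] by simp
  ultimately show ?thesis unfolding ws_def by (simp add: sums_iff)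
qed
lemma bnd_delta: "bnd (\<lambda>n. if n = 0 then c else 0)"
  unfolding bnd_def by (rule exI[of _ "\<bar>c\<bar>"]) auto

lemma tele: "ws (s (Suc t)) = ws (s t) - (1/2) * s t 0"
proof -
  have "ws (s (Suc t)) = ws (\<lambda>n. Q (s t) n * (\<lambda>_. 1) n)" by (simp add: s_Suc)
  also have "\<dots> = ws (\<lambda>n. s t n * Q (\<lambda>_. 1) n)"
    by (rule reversible[OF bnd_s bnd_const])
  also have "\<dots> = ws (\<lambda>n. s t n - (if n = 0 then s t 0 / 4 else 0))"
    by (rule arg_cong[where f=ws]) (auto simp: fun_eq_iff Q1)
  also have "\<dots> = ws (s t) - (1/2) * s t 0"
    by (subst ws_diff[OF bnd_s bnd_delta]) (simp add: ws_delta)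
  finally show ?thesis .
qed

definition W where "W = ws (\<lambda>_. 1)"

lemma sum_s0: "(\<Sum>k<t. s k 0) \<le> 2 * W"
proof -
  have "ws (s t) + (1/2) * (\<Sum>k<t. s k 0) = W"
  proof (induction t)
    case 0 then show ?case by (simp add: W_def s0)
  next
    case (Suc t) then show ?case by (simp add: tele field_simps)
  qed
  moreover have "0 \<le> ws (s t)" using bnd_s s_bounds by (intro ws_nonneg) auto
  ultimately show ?thesis by simp
qed

lemma s0_bound: "real (Suc j) * s j 0 \<le> 2 * W"
proof -
  have "s j 0 \<le> s k 0" if "k \<le> j" for k
    using lift_Suc_antimono_le[of "\<lambda>k. s k 0", OF s_dec that] by simp
  then have "(\<Sum>k<Suc j. s j 0) \<le> (\<Sum>k<Suc j. s k 0)" by (intro sum_mono) auto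
  then show ?thesis using sum_s0[of "Suc j"] by simp
qed


end

context walk begin
definition d :: "nat \<Rightarrow> nat \<Rightarrow> real" where "d t n = s t n - g t n"
lemma bnd_d: "bnd (d t)" unfolding d_def by (intro bnd_diff bnd_s bnd_g)
lemma d_Suc: "d (Suc t) n = Q (d t) n + (if n = 0 then g t 0 / 4 else 0)"
  unfolding d_def s_Suc g_Suc Q'_eq by (simp add: Q_diff[symmetric])

lemma d_key: "bnd h \<Longrightarrow> ws (\<lambda>n. d t n * (Q ^^ m) h n)
   = (1/2) * (\<Sum>k<t. g k 0 * (Q ^^ (t - Suc k + m)) h 0)"
proof (induction t arbitrary: m)
  case 0 then show ?case by (simp add: d_def s0 g0 ws_def)
next
  case (Suc t)
  let ?H = "(Q ^^ m) h"
  have bH: "bnd ?H" using Suc.prems by (rule bnd_Qpow)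
  have "ws (\<lambda>n. d (Suc t) n * ?H n)
      = ws (\<lambda>n. Q (d t) n * ?H n + (if n = 0 then g t 0 / 4 * ?H 0 else 0))"
    by (rule arg_cong[where f=ws]) (auto simp: fun_eq_iff d_Suc algebra_simps)
  also have "\<dots> = ws (\<lambda>n. Q (d t) n * ?H n) + 2 * (g t 0 / 4 * ?H 0)"
    by (subst ws_add) (auto intro!: bnd_mult Q_bnd bnd_d bH bnd_delta simp: ws_delta)
  also have "ws (\<lambda>n. Q (d t) n * ?H n) = ws (\<lambda>n. d t n * Q ?H n)"
    by (rule reversible[OF bnd_d bH])
  also have "\<dots> = ws (\<lambda>n. d t n * (Q ^^ Suc m) h n)" by simp
  also have "\<dots> = (1/2) * (\<Sum>k<t. g k 0 * (Q ^^ (t - Suc k + Suc m)) h 0)"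
    using Suc.IH[OF Suc.prems] .
  also have "(\<Sum>k<t. g k 0 * (Q ^^ (t - Suc k + Suc m)) h 0) = (\<Sum>k<t. g k 0 * (Q ^^ (Suc t - Suc k + m)) h 0)"
    by (intro sum.cong) (auto simp: Suc_diff_Suc)
  finally show ?case by (simp add: algebra_simps)
qed

lemma D_formula: "ws (d t) = (1/2) * (\<Sum>k<t. g k 0 * s (t - Suc k) 0)"
  using d_key[of "\<lambda>_. 1" t 0] by (simp add: bnd_const s_def)

lemma D_le: "ws (d t) \<le> (1/2) * (\<Sum>k<t. s k 0 * s (t - Suc k) 0)"
  unfolding D_formula using g_bounds s_bounds
  by (auto intro!: sum_mono mult_right_mono)

lemma conv_bound:
  assumes "t \<ge> 1"
  shows "(\<Sum>k<t. s k 0 * s (t - Suc k) 0) \<le> 4 * (2 * W) * (2 * W) / real (Suc t)"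
proof -
  define M where "M = 2 * W"
  have sj: "s j 0 \<le> 2 * M / real (Suc t)" if "t \<le> 2 * j + 1" for j
  proof -
    have "real (Suc j) * s j 0 \<le> M" using s0_bound[of j] by (simp add: M_def)
    moreover have "real (Suc t) \<le> 2 * real (Suc j)" using that by simp
    moreover have "0 \<le> s j 0" using s_bounds by auto
    moreover have "real (Suc t) * s j 0 \<le> 2 * real (Suc j) * s j 0"
      using calculation by (intro mult_right_mono) auto
    ultimately have "real (Suc t) * s j 0 \<le> 2 * M" by linarith
    then show ?thesis by (simp add: field_simps)
  qed
  have tm: "s k 0 * s (t - Suc k) 0 \<le> 2 * M / real (Suc t) * (s k 0 + s (t - Suc k) 0)" if "k < t" for k
  proof (cases "t \<le> 2 * k + 1")
    case True
    have "s k 0 * s (t - Suc k) 0 \<le> 2 * M / real (Suc t) * s (t - Suc k) 0"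
      using sj[OF True] s_bounds by (intro mult_right_mono) auto
    also have "\<dots> \<le> 2 * M / real (Suc t) * (s k 0 + s (t - Suc k) 0)"
      using s_bounds[of k 0] M_def sum_s0[of 0] by (intro mult_left_mono) auto
    finally show ?thesis .
  next
    case False
    then have "t \<le> 2 * (t - Suc k) + 1" using that by simp
    have "s k 0 * s (t - Suc k) 0 \<le> s k 0 * (2 * M / real (Suc t))"
      using sj[OF \<open>t \<le> 2 * (t - Suc k) + 1\<close>] s_bounds by (intro mult_left_mono) auto
    also have "\<dots> \<le> 2 * M / real (Suc t) * (s k 0 + s (t - Suc k) 0)"
    proof -
      have c0: "0 \<le> 2 * M / real (Suc t)" using M_def sum_s0[of 0] by simp
      have "0 \<le> 2 * M / real (Suc t) * s (t - Suc k) 0"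
        by (rule mult_nonneg_nonneg[OF c0]) (use s_bounds in auto)
      then show ?thesis by (simp add: algebra_simps)
    qed
    finally show ?thesis .
  qed
  have "(\<Sum>k<t. s k 0 * s (t - Suc k) 0) \<le> (\<Sum>k<t. 2 * M / real (Suc t) * (s k 0 + s (t - Suc k) 0))"
    using tm by (intro sum_mono) auto
  also have "\<dots> = 2 * M / real (Suc t) * ((\<Sum>k<t. s k 0) + (\<Sum>k<t. s (t - Suc k) 0))"
    by (simp only: sum.distrib[symmetric] sum_distrib_left)
  also have "(\<Sum>k<t. s (t - Suc k) 0) = (\<Sum>k<t. s k 0)"
    using sum.atLeastLessThan_rev[of "\<lambda>k. s k 0" 0 t] by (simp add: lessThan_atLeast0)
  also have "2 * M / real (Suc t) * ((\<Sum>k<t. s k 0) + (\<Sum>k<t. s k 0)) \<le> 2 * M / real (Suc t) * (M + M)"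
    using sum_s0[of t] M_def sum_s0[of 0] by (intro mult_left_mono) auto
  also have "2 * M / real (Suc t) * (M + M) = (2 * M * (M + M)) / real (Suc t)"
    by (rule times_divide_eq_left)
  also have "2 * M * (M + M) = 4 * (2 * W) * (2 * W)" by (simp add: M_def algebra_simps)
  finally show ?thesis .
qed

lemma S_lower:
  assumes "t \<ge> 1"
  shows "ws (s t) \<ge> real t * (2 * (2 * real t) powr (-\<beta>))"
proof -
  have "(\<Sum>n\<in>{t..<2*t}. w n * s t n) \<le> ws (s t)"
    unfolding ws_def using summable_wf'[OF bnd_s]
      mult_nonneg_nonneg[OF less_imp_le[OF w_pos] conjunct1[OF s_bounds]]
    by (intro sum_le_suminf) auto
  moreover have "(\<Sum>n\<in>{t..<2*t}. w n * s t n) \<ge> (\<Sum>n\<in>{t..<2*t}. 2 * (2 * real t) powr (-\<beta>))"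
  proof (intro sum_mono)
    fix n assume n: "n \<in> {t..<2*t}"
    then have "s t n = 1" by (intro s_far) auto
    have "(2 * real t) powr (-\<beta>) \<le> real (Suc n) powr (-\<beta>)"
      using n b1 by (intro powr_mono2') auto
    then have "(2 * real t) powr (-\<beta>) \<le> a (Suc n)" by (simp add: a_def)
    then have "2 * (2 * real t) powr (-\<beta>) \<le> w n"
      using a_nonneg[of n] unfolding w_def by simp
    then show "2 * (2 * real t) powr (-\<beta>) \<le> w n * s t n" using \<open>s t n = 1\<close> by simp
  qed
  ultimately show ?thesis by simp
qed

lemma W_pos: "W > 0"
proof -
  have "W \<ge> ws (s 1)" unfolding W_def s0[symmetric] using tele[of 0] s_bounds by simp
  moreover have "ws (s 1) \<ge> real 1 * (2 * (2 * real 1) powr (-\<beta>))" by (rule S_lower) simp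
  moreover have "0 < (2 * real 1) powr (-\<beta>)" by simp
  ultimately show ?thesis by linarith
qed

lemma main_abstract1: "ws (g t) \<le> ws (s t)"
proof -
  have "0 \<le> ws (d t)" using bnd_d g_bounds by (intro ws_nonneg) (auto simp: d_def)
  then show ?thesis unfolding d_def by (simp add: ws_diff bnd_s bnd_g)
qed

lemma main_abstract2:
  assumes "e > 0"
  shows "\<exists>t0. \<forall>t\<ge>t0. ws (s t) - ws (g t) \<le> e * ws (s t)"
proof -
  define K where "K = 8 * W * W / e"
  define c where "c = 2 * 2 powr (-\<beta>)"
  have c0: "c > 0" by (simp add: c_def)
  define K' where "K' = max 1 (K / c)"
  define T where "T = K' powr (1 / (2 - \<beta>))"
  obtain t1 :: nat where t1T: "T \<le> real t1" using real_arch_simple by blast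
  have t1: "real t * (real t * (2 * (2 * real t) powr (-\<beta>))) \<ge> K" if "t \<ge> max t1 1" for t
  proof -
    have tp: "real t > 0" using that by auto
    have eq: "real t * (real t * (2 * (2 * real t) powr (-\<beta>))) = c * real t powr (2 - \<beta>)"
    proof -
      have "(2 * real t) powr (-\<beta>) = 2 powr (-\<beta>) * real t powr (-\<beta>)"
        using tp by (simp add: powr_mult)
      moreover have "real t powr (2 - \<beta>) = real t powr 2 * real t powr (-\<beta>)"
      proof -
        have "real t powr (2 - \<beta>) = real t powr (2 + (-\<beta>))" by simp
        also have "\<dots> = real t powr 2 * real t powr (-\<beta>)" by (rule powr_add)
        finally show ?thesis .
      qed
      moreover have "real t powr 2 = real t * real t" using tp by (simp add: power2_eq_square)
      ultimately show ?thesis by (simp add: c_def algebra_simps)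
    qed
    have K'pos: "K' > 0" by (simp add: K'_def)
    have "T \<le> real t" using t1T that by simp
    then have "T powr (2 - \<beta>) \<le> real t powr (2 - \<beta>)"
      using b2 by (intro powr_mono2) (auto simp: T_def)
    moreover have "T powr (2 - \<beta>) = K'"
      using b2 K'pos by (simp add: T_def powr_powr)
    ultimately have "K' \<le> real t powr (2 - \<beta>)" by simp
    moreover have "K / c \<le> K'" by (simp add: K'_def)
    ultimately have "K / c \<le> real t powr (2 - \<beta>)" by linarith
    then have "K \<le> c * real t powr (2 - \<beta>)" using c0 by (simp add: field_simps)
    then show ?thesis using eq by simp
  qed
  show ?thesis
  proof (intro exI[of _ "max t1 1"] allI impI)
    fix t assume tm: "t \<ge> max t1 1"
    then have tt: "t \<ge> max t1 1" "t \<ge> 1" by auto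
    have "ws (s t) - ws (g t) = ws (d t)" unfolding d_def by (simp add: ws_diff bnd_s bnd_g)
    also have "\<dots> \<le> (1/2) * (4 * (2 * W) * (2 * W) / real (Suc t))"
      using D_le[of t] conv_bound[OF tt(2)] by simp
    also have "\<dots> = 8 * W * W / real (Suc t)" by simp
    also have "\<dots> \<le> 8 * W * W / real t" using tt(2)
      by (intro divide_left_mono) auto
    also have "\<dots> \<le> e * ws (s t)"
    proof -
      have "K \<le> real t * (real t * (2 * (2 * real t) powr (-\<beta>)))" using t1[OF tt(1)] by simp
      also have "\<dots> \<le> real t * ws (s t)" using S_lower[OF tt(2)] by (intro mult_left_mono) auto
      finally have "8 * W * W / e \<le> real t * ws (s t)" by (simp add: K_def)
      then show ?thesis using assms tt(2) by (simp add: field_simps)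
    qed
    finally show "ws (s t) - ws (g t) \<le> e * ws (s t)" .
  qed
qed

end


lemma infsum_supp:
  fixes f :: "'a \<Rightarrow> real"
  assumes "finite F" "\<And>y. y \<in> A \<Longrightarrow> y \<notin> F \<Longrightarrow> f y = 0"
  shows "infsum f A = sum f (A \<inter> F)"
proof -
  have "infsum f A = infsum f (A \<inter> F)" by (rule infsum_cong_neutral) (use assms in auto)
  also have "\<dots> = sum f (A \<inter> F)" using assms(1) by simp
  finally show ?thesis .
qed

lemma cond_sym: "cond b (-x) (-y) = cond b x y"
  unfolding cond_def by (auto simp: sgn_minus abs_minus_commute)

lemma cond_supp: "cond b x y \<noteq> 0 \<Longrightarrow> y \<in> {x - 1, x, x + 1, -x}"
  unfolding cond_def by (auto split: if_splits simp: abs_if)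

context walk begin

lemma cond_right: "cond \<beta> (int n + 1) (int n + 2) = a (Suc n)"
  unfolding cond_def a_def by (simp add: sgn_if add.commute)
lemma cond_left: "cond \<beta> (int n + 1) (int n) = a n"
  unfolding cond_def a_def by (cases n) (auto simp: sgn_if add.commute)
lemma cond_diag: "cond \<beta> (int n + 1) (int n + 1) = (if n = 0 then 1/2 else a n + a (Suc n))"
  unfolding cond_def a_def by (auto simp: add.commute)
lemma cond_m1: "cond \<beta> (int n + 1) (-1) = (if n = 0 then 1/2 else 0)"
  unfolding cond_def by (auto simp: sgn_if)
lemma cond_other: "y \<notin> {int n, int n + 1, int n + 2, -1} \<Longrightarrow> cond \<beta> (int n + 1) y = 0"
proof -
  assume y: "y \<notin> {int n, int n + 1, int n + 2, -1}"
  have "cond \<beta> (int n + 1) (-(int n + 1)) = 0" if "n > 0" using that by (simp add: cond_def sgn_if)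
  show ?thesis
  proof (rule ccontr)
    assume ne: "cond \<beta> (int n + 1) y \<noteq> 0"
    then have "y \<in> {int n + 1 - 1, int n + 1, int n + 1 + 1, -(int n + 1)}" by (rule cond_supp)
    with y have yy: "y = -(int n + 1)" by auto
    show False
    proof (cases "n = 0")
      case True then show ?thesis using y yy by simp
    next
      case False then show ?thesis using ne yy \<open>n > 0 \<Longrightarrow> _\<close> by simp
    qed
  qed
qed

lemma F4: "finite {int n, int n + 1, int n + 2, -1}" by simp

lemma sum_F4: "sum f {int n, int n + 1, int n + 2, -1} = f (int n) + f (int n + 1) + f (int n + 2) + f (-1)"
proof -
  have "int n \<noteq> -1" "int n + 1 \<noteq> -1" "int n + 2 \<noteq> -1" by linarith+
  then show ?thesis by (simp add: algebra_simps)
qed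

lemma pi_pos: "pi_w \<beta> (int n + 1) = w n"
proof -
  have "pi_w \<beta> (int n + 1) = sum (cond \<beta> (int n + 1)) (UNIV \<inter> {int n, int n + 1, int n + 2, -1})"
    unfolding pi_w_def by (rule infsum_supp[OF F4]) (rule cond_other, simp)
  also have "\<dots> = a n + (if n = 0 then 1/2 else a n + a (Suc n)) + a (Suc n) + (if n = 0 then 1/2 else 0)"
    using sum_F4 cond_left cond_diag cond_right cond_m1 by simp
  also have "\<dots> = w n" by (auto simp: w_def)
  finally show ?thesis .
qed

lemma uminus_bij: "bij_betw uminus (UNIV::int set) UNIV"
  by (rule bij_betwI[where g=uminus]) auto

lemma pi_neg: "pi_w \<beta> (-(int n + 1)) = w n"
proof -
  have "pi_w \<beta> (-(int n + 1)) = infsum (\<lambda>y. cond \<beta> (-(int n + 1)) (-y)) UNIV"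
    unfolding pi_w_def by (rule infsum_reindex_bij_betw[OF uminus_bij, symmetric])
  also have "\<dots> = pi_w \<beta> (int n + 1)" unfolding pi_w_def cond_sym[of \<beta> "int n + 1", symmetric]
    by (simp add: cond_sym)
  finally show ?thesis by (simp add: pi_pos)
qed

lemma tp_pos: "trans_p \<beta> (int n + 1) y = cond \<beta> (int n + 1) y / w n"
  unfolding trans_p_def by (simp add: pi_pos)

lemma tp_sym: "trans_p \<beta> (-x) (-y) = trans_p \<beta> x y"
proof -
  have "pi_w \<beta> (-x) = pi_w \<beta> x"
  proof -
    have "pi_w \<beta> (-x) = infsum (\<lambda>y. cond \<beta> (-x) (-y)) UNIV"
      unfolding pi_w_def by (rule infsum_reindex_bij_betw[OF uminus_bij, symmetric])
    then show ?thesis by (simp add: cond_sym pi_w_def)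
  qed
  then show ?thesis unfolding trans_p_def by (simp add: cond_sym)
qed

lemma r0: "r 0 = 1/2" by (simp add: r_def)

lemma T_pos: "infsum (\<lambda>z. trans_p \<beta> (int n + 1) z * V z) UNIV
   = L n * V (int n) + cc n * V (int n + 1) + r n * V (int n + 2) + (if n = 0 then V (-1) / 4 else 0)"
proof -
  have "infsum (\<lambda>z. trans_p \<beta> (int n + 1) z * V z) UNIV
      = sum (\<lambda>z. trans_p \<beta> (int n + 1) z * V z) (UNIV \<inter> {int n, int n + 1, int n + 2, -1})"
    by (rule infsum_supp[OF F4]) (simp add: tp_pos cond_other)
  also have "\<dots> = trans_p \<beta> (int n + 1) (int n) * V (int n) + trans_p \<beta> (int n + 1) (int n + 1) * V (int n + 1)
     + trans_p \<beta> (int n + 1) (int n + 2) * V (int n + 2) + trans_p \<beta> (int n + 1) (-1) * V (-1)"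
    using sum_F4 by simp
  also have "trans_p \<beta> (int n + 1) (int n) = L n" by (simp add: tp_pos cond_left L_def)
  also have "trans_p \<beta> (int n + 1) (int n + 1) = cc n"
  proof -
    have p: "a n + a (Suc n) > 0" using a_nonneg[of n] a_Suc_pos[of n] by simp
    show ?thesis using p by (simp add: tp_pos cond_diag cc_def w_def)
  qed
  also have "trans_p \<beta> (int n + 1) (int n + 2) = r n" by (simp add: tp_pos cond_right r_def)
  also have "trans_p \<beta> (int n + 1) (-1) = (if n = 0 then 1/4 else 0)" by (simp add: tp_pos cond_m1)
  finally show ?thesis by simp
qed

lemma T_neg: "infsum (\<lambda>z. trans_p \<beta> (-(int n + 1)) z * V z) UNIV
   = L n * V (-int n) + cc n * V (-(int n + 1)) + r n * V (-(int n + 2)) + (if n = 0 then V 1 / 4 else 0)"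
proof -
  have "infsum (\<lambda>z. trans_p \<beta> (-(int n + 1)) z * V z) UNIV
      = infsum (\<lambda>z. trans_p \<beta> (-(int n + 1)) (-z) * V (-z)) UNIV"
    by (rule infsum_reindex_bij_betw[OF uminus_bij, symmetric])
  also have "\<dots> = infsum (\<lambda>z. trans_p \<beta> (int n + 1) z * (\<lambda>z. V (-z)) z) UNIV"
    using tp_sym[of "int n + 1"] by simp
  also have "\<dots> = L n * V (-int n) + cc n * V (-(int n + 1)) + r n * V (-(int n + 2)) + (if n = 0 then V 1 / 4 else 0)"
    by (subst T_pos) simp
  finally show ?thesis .
qed

lemma infsum_restr: "infsum (f :: int \<Rightarrow> real) A = infsum (\<lambda>z. if z \<in> A then f z else 0) UNIV"
  by (rule infsum_cong_neutral) auto

lemma int2: "int n + 2 = int (Suc n) + 1" by simp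

lemma stay_eq: "stay_in \<beta> posC t (int n + 1) = s t n"
proof (induction t arbitrary: n)
  case 0 then show ?case by (simp add: s0)
next
  case (Suc t)
  define V where "V z = (if z \<in> posC then stay_in \<beta> posC t z else 0)" for z
  have e0: "stay_in \<beta> posC (Suc t) (int n + 1) = infsum (\<lambda>z. trans_p \<beta> (int n + 1) z * V z) UNIV"
    unfolding stay_in.simps infsum_restr[of _ posC]
    by (rule arg_cong[where f="\<lambda>f. infsum f UNIV"]) (auto simp: V_def fun_eq_iff)
  have e1: "infsum (\<lambda>z. trans_p \<beta> (int n + 1) z * V z) UNIV = L n * V (int n) + cc n * V (int n + 1) + r n * V (int n + 2) + (if n = 0 then V (-1) / 4 else 0)"
    by (rule T_pos)
  have e2: "V (-1) = 0" by (simp add: V_def posC_def)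
  have pc: "int k + 1 \<in> posC" for k by (simp add: posC_def)
  have e3: "V (int n + 1) = s t n" using pc[of n] by (simp add: V_def Suc.IH)
  have e4: "V (int n + 2) = s t (Suc n)" unfolding int2 using pc[of "Suc n"] by (simp only: V_def Suc.IH if_True)
  have e5: "L n * V (int n) = L n * s t (n - 1)"
  proof (cases n)
    case 0 then show ?thesis by simp
  next
    case (Suc m)
    then have "int n = int m + 1" by simp
    moreover have "V (int m + 1) = s t m" using pc[of m] Suc.IH[of m] by (simp only: V_def if_True)
    ultimately show ?thesis using Suc by (simp add: add.commute)
  qed
  show ?case unfolding e0 e1 e2 e3 e4 e5 by (simp add: s_Suc Q_def)
qed

lemma tp_supp: "trans_p \<beta> x z \<noteq> 0 \<Longrightarrow> \<bar>z\<bar> \<le> \<bar>x\<bar> + 1"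
  unfolding trans_p_def using cond_supp[of \<beta> x z] by (auto split: if_splits)

lemma tpow_supp: "trans_pow \<beta> t x y \<noteq> 0 \<Longrightarrow> \<bar>y\<bar> \<le> \<bar>x\<bar> + int t"
proof (induction t arbitrary: x)
  case 0 then show ?case by (simp split: if_splits)
next
  case (Suc t)
  show ?case
  proof (rule ccontr)
    assume far: "\<not> \<bar>y\<bar> \<le> \<bar>x\<bar> + int (Suc t)"
    have z0: "\<And>z. trans_p \<beta> x z * trans_pow \<beta> t z y = 0"
    proof -
      fix z
      show "trans_p \<beta> x z * trans_pow \<beta> t z y = 0"
      proof (cases "trans_p \<beta> x z = 0")
        case False
        then have "\<bar>z\<bar> \<le> \<bar>x\<bar> + 1" by (rule tp_supp)
        then have "trans_pow \<beta> t z y = 0" using Suc.IH[of z] far by force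
        then show ?thesis by simp
      qed simp
    qed
    have "trans_pow \<beta> (Suc t) x y = 0" unfolding trans_pow.simps by (rule infsum_0, rule z0)
    then show False using Suc.prems by simp
  qed
qed

definition U :: "nat \<Rightarrow> int \<Rightarrow> real" where "U t x = infsum (\<lambda>y. trans_pow \<beta> t x y) posC"

lemma U_Suc: "U (Suc t) x = infsum (\<lambda>z. trans_p \<beta> x z * U t z) UNIV"
proof -
  define I where "I k = {-(\<bar>x\<bar> + int k) .. \<bar>x\<bar> + int k}" for k
  have fI: "finite (I k)" for k by (simp add: I_def)
  have inI: "trans_pow \<beta> k x' y \<noteq> 0 \<Longrightarrow> \<bar>x'\<bar> + int k \<le> \<bar>x\<bar> + int k' \<Longrightarrow> y \<in> I k'" for k x' y k'
    using tpow_supp[of k x' y] unfolding I_def by auto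
  have step: "trans_pow \<beta> (Suc t) x y = (\<Sum>z\<in>I 1. trans_p \<beta> x z * trans_pow \<beta> t z y)" for y
  proof -
    have "trans_pow \<beta> (Suc t) x y = sum (\<lambda>z. trans_p \<beta> x z * trans_pow \<beta> t z y) (UNIV \<inter> I 1)"
      unfolding trans_pow.simps by (rule infsum_supp[OF fI]) (use tp_supp in \<open>force simp: I_def\<close>)
    then show ?thesis by simp
  qed
  have "U (Suc t) x = sum (\<lambda>y. trans_pow \<beta> (Suc t) x y) (posC \<inter> I (Suc t))"
    unfolding U_def by (rule infsum_supp[OF fI]) (use inI in blast)
  also have "\<dots> = (\<Sum>y\<in>posC \<inter> I (Suc t). \<Sum>z\<in>I 1. trans_p \<beta> x z * trans_pow \<beta> t z y)"
    by (rule sum.cong[OF refl step])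
  also have "\<dots> = (\<Sum>z\<in>I 1. trans_p \<beta> x z * (\<Sum>y\<in>posC \<inter> I (Suc t). trans_pow \<beta> t z y))"
    by (subst sum.swap) (simp add: sum_distrib_left)
  also have "\<dots> = (\<Sum>z\<in>I 1. trans_p \<beta> x z * U t z)"
  proof (intro sum.cong refl)
    fix z assume z: "z \<in> I 1"
    have "U t z = sum (\<lambda>y. trans_pow \<beta> t z y) (posC \<inter> I (Suc t))"
      unfolding U_def
    proof (rule infsum_supp[OF fI])
      fix y assume "y \<notin> I (Suc t)"
      moreover have "\<bar>z\<bar> + int t \<le> \<bar>x\<bar> + int (Suc t)" using z by (auto simp: I_def)
      ultimately show "trans_pow \<beta> t z y = 0" using inI[of t z y "Suc t"] by blast
    qed
    then show "trans_p \<beta> x z * (\<Sum>y\<in>posC \<inter> I (Suc t). trans_pow \<beta> t z y) = trans_p \<beta> x z * U t z"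
      by simp
  qed
  also have "\<dots> = infsum (\<lambda>z. trans_p \<beta> x z * U t z) UNIV"
    by (subst infsum_supp[OF fI[of 1]]) (use tp_supp in \<open>force simp: I_def\<close>, simp)
  finally show ?thesis .
qed

lemma U_vals: "U t (int n + 1) = 1/2 + g t n / 2 \<and> U t (-(int n + 1)) = 1/2 - g t n / 2"
proof (induction t arbitrary: n)
  case 0
  have "U 0 x = sum (\<lambda>y. if x = y then 1 else 0) (posC \<inter> {x})" for x
    unfolding U_def trans_pow.simps by (rule infsum_supp) auto
  then show ?case by (auto simp: g0 posC_def)
next
  case (Suc t)
  have pos1: "U t (int k + 1) = 1/2 + g t k / 2" for k using Suc.IH by blast
  have neg1: "U t (-(int k + 1)) = 1/2 - g t k / 2" for k using Suc.IH by blast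
  have Lnn: "L n = 1/2 - r n" if "n > 0" using Lcr[of n] that by (simp add: cc_def)
  have A: "L n * U t (int n) = L n * (1/2 + g t (n - 1) / 2)"
  proof (cases n)
    case (Suc m) then have "int n = int m + 1" by simp
    then show ?thesis using pos1[of m] Suc by (simp add: add.commute)
  qed simp
  have B: "L n * U t (- int n) = L n * (1/2 - g t (n - 1) / 2)"
  proof (cases n)
    case (Suc m) then have "- int n = -(int m + 1)" by simp
    then show ?thesis using neg1[of m] Suc by (simp add: add.commute)
  qed simp
  have C: "U t (int n + 2) = 1/2 + g t (Suc n) / 2" unfolding int2 by (rule pos1)
  have D: "U t (-(int n + 2)) = 1/2 - g t (Suc n) / 2" unfolding int2 by (rule neg1)
  have E: "U t (-1) = 1/2 - g t 0 / 2" using neg1[of 0] by simp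
  have F: "U t 1 = 1/2 + g t 0 / 2" using pos1[of 0] by simp
  have "U (Suc t) (int n + 1) = L n * U t (int n) + cc n * U t (int n + 1) + r n * U t (int n + 2) + (if n = 0 then U t (-1) / 4 else 0)"
    unfolding U_Suc by (rule T_pos)
  also have "\<dots> = 1/2 + g (Suc t) n / 2"
    unfolding A C E pos1 g_Suc Q'_def
    by (cases "n = 0") (auto simp: r0 cc_def Lnn field_simps)
  finally have P: "U (Suc t) (int n + 1) = 1/2 + g (Suc t) n / 2" .
  have "U (Suc t) (-(int n + 1)) = L n * U t (- int n) + cc n * U t (-(int n + 1)) + r n * U t (-(int n + 2)) + (if n = 0 then U t 1 / 4 else 0)"
    unfolding U_Suc by (rule T_neg)
  also have "\<dots> = 1/2 - g (Suc t) n / 2"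
    unfolding B D F neg1 g_Suc Q'_def
    by (cases "n = 0") (auto simp: r0 cc_def Lnn field_simps)
  finally show ?case using P by simp
qed

lemma conv:
  assumes h: "bij_betw h UNIV A" and bd: "\<And>n. \<bar>F (h n)\<bar> \<le> B * w n"
  shows "(F has_sum (\<Sum>n. F (h n))) A"
proof -
  have sm: "summable (\<lambda>n. norm (F (h n)))"
  proof (rule summable_comparison_test[where g="\<lambda>n. B * w n"])
    show "\<exists>N. \<forall>n\<ge>N. norm (norm (F (h n))) \<le> B * w n" using bd by auto
    show "summable (\<lambda>n. B * w n)" using summable_w by (rule summable_mult)
  qed
  then have "summable (\<lambda>n. F (h n))" by (rule summable_norm_cancel)
  then have "((\<lambda>n. F (h n)) has_sum (\<Sum>n. F (h n))) UNIV"
    using sm by (intro norm_summable_imp_has_sum) (auto intro: summable_sums)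
  then show ?thesis using has_sum_reindex_bij_betw[OF h] by blast
qed

lemma bij_pos: "bij_betw (\<lambda>n::nat. int n + 1) UNIV posC"
  by (rule bij_betwI[where g="\<lambda>x. nat x - 1"]) (auto simp: posC_def)
lemma bij_neg: "bij_betw (\<lambda>n::nat. -(int n + 1)) UNIV {..<0}"
  by (rule bij_betwI[where g="\<lambda>x. nat (-x) - 1"]) auto

lemma Zs: "infsum (pi_w \<beta>) (-{0}) = 2 * W"
proof -
  have hp: "(pi_w \<beta> has_sum (\<Sum>n. pi_w \<beta> (int n + 1))) posC"
    by (rule conv[OF bij_pos, where B=1]) (simp add: pi_pos abs_of_pos w_pos)
  have hn: "(pi_w \<beta> has_sum (\<Sum>n. pi_w \<beta> (-(int n + 1)))) {..<0}"
    by (rule conv[OF bij_neg, where B=1]) (simp only: pi_neg, simp add: abs_of_pos w_pos)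
  have "-{0::int} = posC \<union> {..<0}" by (auto simp: posC_def)
  then have "infsum (pi_w \<beta>) (-{0}) = infsum (pi_w \<beta>) posC + infsum (pi_w \<beta>) {..<0}"
  proof -
    have "infsum (pi_w \<beta>) (posC \<union> {..<0}) = infsum (pi_w \<beta>) posC + infsum (pi_w \<beta>) {..<0}"
      by (rule infsum_Un_disjoint) (use hp hn in \<open>auto simp: summable_on_def posC_def\<close>)
    then show ?thesis using \<open>-{0::int} = posC \<union> {..<0}\<close> by simp
  qed
  also have "\<dots> = (\<Sum>n. w n) + (\<Sum>n. w n)"
  proof -
    have en: "(\<lambda>n. pi_w \<beta> (-(int n + 1))) = w" by (rule ext) (rule pi_neg)
    have ep: "(\<lambda>n. pi_w \<beta> (int n + 1)) = w" by (rule ext) (rule pi_pos)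
    show ?thesis using hp hn unfolding en ep by (simp add: infsumI)
  qed
  finally show ?thesis by (simp add: W_def ws_def)
qed

lemma pi_norm_pos: "pi_norm \<beta> (int n + 1) = w n / (2 * W)"
  unfolding pi_norm_def using Zs pi_pos by simp

lemma wsum_norm:
  assumes "\<And>n. \<bar>f n\<bar> \<le> 1"
  shows "(\<Sum>n. w n / (2 * W) * f n) = ws f / (2 * W)"
proof -
  have "(\<Sum>n. w n / (2 * W) * f n) = (\<Sum>n. (1 / (2 * W)) * (w n * f n))" by simp
  also have "\<dots> = (1 / (2 * W)) * ws f" unfolding ws_def
    by (rule suminf_mult) (rule summable_wf, use assms in blast)
  finally show ?thesis by simp
qed

lemma conv_pos:
  assumes "\<And>n. F (int n + 1) = w n / (2 * W) * f n" "\<And>n. \<bar>f n\<bar> \<le> 1"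
  shows "infsum F posC = ws f / (2 * W)"
proof -
  have "(F has_sum (\<Sum>n. F (int n + 1))) posC"
  proof (rule conv[OF bij_pos, where B="1 / (2 * W)"])
    fix n
    have "\<bar>F (int n + 1)\<bar> = w n / (2 * W) * \<bar>f n\<bar>"
      using assms(1) W_pos w_pos[of n] by (simp add: abs_mult)
    also have "\<dots> \<le> w n / (2 * W) * 1"
      using assms(2) W_pos w_pos[of n] by (intro mult_left_mono) auto
    finally show "\<bar>F (int n + 1)\<bar> \<le> 1 / (2 * W) * w n" by simp
  qed
  then have "infsum F posC = (\<Sum>n. w n / (2 * W) * f n)" using assms(1) by (simp add: infsumI)
  also have "\<dots> = ws f / (2 * W)" by (rule wsum_norm[OF assms(2)])
  finally show ?thesis .
qed

lemma prob_start_val: "prob_start \<beta> posC = 1/2"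
proof -
  have "prob_start \<beta> posC = ws (\<lambda>_. 1) / (2 * W)"
    unfolding prob_start_def by (rule conv_pos) (simp_all add: pi_norm_pos)
  then show ?thesis using W_pos by (simp add: W_def)
qed

lemma prob_stay_val: "prob_stay \<beta> posC t = ws (s t) / (2 * W)"
  unfolding prob_stay_def
  by (rule conv_pos) (simp_all add: pi_norm_pos stay_eq abs_of_nonneg s_bounds)

lemma prob_both_val: "prob_both \<beta> posC t = (W + ws (g t)) / (4 * W)"
proof -
  have "prob_both \<beta> posC t = ws (\<lambda>n. 1/2 + g t n / 2) / (2 * W)"
    unfolding prob_both_def
  proof (rule conv_pos)
    show "pi_norm \<beta> (int n + 1) * infsum (trans_pow \<beta> t (int n + 1)) posC = w n / (2 * W) * (1/2 + g t n / 2)" for n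
      using U_vals[of t n] by (simp add: pi_norm_pos U_def)
    show "\<bar>1/2 + g t n / 2\<bar> \<le> 1" for n using g_bounds[of t n] s_bounds[of t n] by auto
  qed
  also have "ws (\<lambda>n. 1/2 + g t n / 2) = ws (\<lambda>_. 1/2) + ws (\<lambda>n. g t n / 2)"
  proof (rule ws_add)
    show "bnd (\<lambda>_. 1/2::real)" by (rule bnd_const)
    have "\<bar>g t n / 2\<bar> \<le> 1" for n using g_bounds[of t n] s_bounds[of t n] by auto
    then show "bnd (\<lambda>n. g t n / 2)" unfolding bnd_def by blast
  qed
  also have "ws (\<lambda>_. 1/2) = W / 2" unfolding W_def ws_def
    using suminf_mult[of "\<lambda>n. w n * 1" "1/2"] summable_w by (simp add: mult.commute)
  also have "ws (\<lambda>n. g t n / 2) = ws (g t) / 2" unfolding ws_def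
    using suminf_divide[of "\<lambda>n. w n * g t n" 2] summable_wf'[OF bnd_g] by simp
  finally show ?thesis using W_pos by (simp add: field_simps)
qed


end

theorem mainTheorem7:
  fixes \<beta> :: real
  assumes "1 < \<beta>" and "\<beta> < 2"
  shows "(\<forall>t::nat. prob_both \<beta> posC t - (prob_start \<beta> posC)\<^sup>2
                  \<le> 1/2 * prob_stay \<beta> posC t)
       \<and> (\<forall>\<epsilon>>0. \<exists>t0::nat. \<forall>t\<ge>t0.
            prob_both \<beta> posC t - (prob_start \<beta> posC)\<^sup>2
              \<ge> (1/2 - \<epsilon>) * prob_stay \<beta> posC t)"
proof -
  interpret walk \<beta> using assms by unfold_locales
  have Wp: "W > 0" by (rule W_pos)
  have cov: "prob_both \<beta> posC t - (prob_start \<beta> posC)\<^sup>2 = ws (g t) / (4 * W)" for t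
    unfolding prob_both_val prob_start_val using Wp by (simp add: field_simps power2_eq_square)
  have st: "1/2 * prob_stay \<beta> posC t = ws (s t) / (4 * W)" for t
    unfolding prob_stay_val by simp
  show ?thesis
  proof (intro conjI allI impI)
    fix t :: nat
    show "prob_both \<beta> posC t - (prob_start \<beta> posC)\<^sup>2 \<le> 1/2 * prob_stay \<beta> posC t"
      unfolding cov st using main_abstract1[of t] Wp by (intro divide_right_mono) auto
  next
    fix \<epsilon> :: real assume e: "\<epsilon> > 0"
    obtain t0 where t0: "\<And>t. t \<ge> t0 \<Longrightarrow> ws (s t) - ws (g t) \<le> (2 * \<epsilon>) * ws (s t)"
      using main_abstract2[of "2 * \<epsilon>"] e by auto
    show "\<exists>t0::nat. \<forall>t\<ge>t0. prob_both \<beta> posC t - (prob_start \<beta> posC)\<^sup>2 \<ge> (1/2 - \<epsilon>) * prob_stay \<beta> posC t"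
    proof (intro exI allI impI)
      fix t assume "t \<ge> t0"
      then have h: "(1 - 2 * \<epsilon>) * ws (s t) \<le> ws (g t)" using t0[of t] by (simp add: algebra_simps)
      have "(1/2 - \<epsilon>) * prob_stay \<beta> posC t = (1 - 2 * \<epsilon>) * ws (s t) / (4 * W)"
        unfolding prob_stay_val using Wp by (simp add: field_simps)
      also have "\<dots> \<le> ws (g t) / (4 * W)" using h Wp by (intro divide_right_mono) auto
      finally show "prob_both \<beta> posC t - (prob_start \<beta> posC)\<^sup>2 \<ge> (1/2 - \<epsilon>) * prob_stay \<beta> posC t"
        unfolding cov .
    qed
  qed
qed

end
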